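(* Let $k\ge 1$ and $n \ge 3k+1$ be integers, and let $W_n$ be the squared cycle graph on $[n]=\{1,\dots,n\}$. Then every subset $A\subseteq [n]$ with $|A| = 3k-2$ contains an independent set of size $k$ of $W_n$. Consequently, every subset of $[n]$ of cardinality at most $n-3k+2$ is a face of the total cut complex $\Delta_k^t(W_n)$.
   Context: The squared cycle graph $W_n$ is the graph with vertex set $[n]$ and edge set $\{\{i,i+1 \bmod n\},\{i,i+2 \bmod n\} : i=1,\dots,n\}$. An independent set of size $k$ (a $k$-independent set) is a set of $k$ pairwise non-adjacent vertices. For a graph $G=(V,E)$ and $k\ge 1$, the $k$-total cut complex $\Delta_k^t(G)$ is the simplicial complex on $V$ whose facets are the sets $V\setminus S$ where $S$ ranges over independent sets of $G$ of size $k$; equivalently, $\sigma\subseteq V$ is a face iff $V\setminus\sigma$ contains an independent set of size $k$. *)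

theory Defs
  imports Main
begin

definition sq_cycle_adj :: "nat \<Rightarrow> nat \<Rightarrow> nat \<Rightarrow> bool" where
  "sq_cycle_adj n i j \<longleftrightarrow> i \<noteq> j \<and>
     ((int j - int i) mod int n \<in> {1, 2, int n - 1, int n - 2})"

definition sq_cycle_vertices :: "nat \<Rightarrow> nat set" where
  "sq_cycle_vertices n = {1..n}"

definition independent_set :: "'a set \<Rightarrow> ('a \<Rightarrow> 'a \<Rightarrow> bool) \<Rightarrow> 'a set \<Rightarrow> bool" where
  "independent_set V E S \<longleftrightarrow> S \<subseteq> V \<and> (\<forall>x\<in>S. \<forall>y\<in>S. \<not> E x y)"

definition total_cut_complex :: "'a set \<Rightarrow> ('a \<Rightarrow> 'a \<Rightarrow> bool) \<Rightarrow> nat \<Rightarrow> 'a set set" where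
  "total_cut_complex V E k =
     {\<sigma>. \<sigma> \<subseteq> V \<and> (\<exists>S. S \<subseteq> V - \<sigma> \<and> independent_set V E S \<and> card S = k)}"

end

theory Submission
  imports Defs
begin

lemma nonadj_far:
  fixes n x y :: nat
  assumes "x < y" "3 \<le> y - x" "y - x + 3 \<le> n"
  shows "\<not> sq_cycle_adj n x y \<and> \<not> sq_cycle_adj n y x"
proof -
  have d1: "(int y - int x) mod int n = int (y - x)"
    using assms by (simp add: of_nat_diff)
  have "(int x - int y) = (int n - int (y - x)) - int n" using assms by (simp add: of_nat_diff)
  then have "(int x - int y) mod int n = (int n - int (y - x)) mod int n"
    by (simp only: minus_mod_self2)
  also have "\<dots> = int n - int (y - x)"
    using assms by (intro mod_pos_pos_trivial) auto
  finally have d2: "(int x - int y) mod int n = int n - int (y - x)" .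
  show ?thesis using assms unfolding sq_cycle_adj_def d1 d2 by auto
qed

lemma mono_gap:
  fixes e :: "nat \<Rightarrow> nat" and N u v :: nat
  assumes mono: "\<And>u v. u < v \<Longrightarrow> v < N \<Longrightarrow> e u < e v"
    and uv: "u \<le> v" "v < N"
  shows "e u + (v - u) \<le> e v"
  using uv
proof (induction v)
  case 0
  then show ?case by simp
next
  case (Suc w)
  show ?case
  proof (cases "u = Suc w")
    case True then show ?thesis by simp
  next
    case False
    then have "u \<le> w" using Suc by simp
    then have "e u + (w - u) \<le> e w" using Suc by simp
    moreover have "e w < e (Suc w)" using mono Suc by simp
    ultimately show ?thesis using \<open>u \<le> w\<close> by simp
  qed
qed

lemma indep_enum:
  fixes e :: "nat \<Rightarrow> nat" and N n u v :: nat
  assumes mono: "\<And>u v. u < v \<Longrightarrow> v < N \<Longrightarrow> e u < e v"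
    and range: "\<And>u. u < N \<Longrightarrow> e u \<in> {1..n}"
    and uv: "u < v" "v < N" "3 \<le> v - u" "v - u + 3 \<le> N"
  shows "\<not> sq_cycle_adj n (e u) (e v) \<and> \<not> sq_cycle_adj n (e v) (e u)"
proof -
  have g1: "e u + (v - u) \<le> e v" using mono_gap[of N e u v, OF mono] uv by simp
  have g0: "e 0 + u \<le> e u" using mono_gap[of N e 0 u, OF mono] uv by simp
  have g2: "e v + (N - 1 - v) \<le> e (N - 1)" using mono_gap[of N e v "N - 1", OF mono] uv by simp
  have "1 \<le> e 0" "e (N - 1) \<le> n" using range uv by auto
  then show ?thesis using g0 g1 g2 uv by (intro nonadj_far) auto
qed

lemma modpair:
  fixes p q t N :: nat
  assumes "p < N" "q = (p + t) mod N" "0 < t" "t < N"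
  shows "(p < q \<and> q - p = t) \<or> (q < p \<and> p - q = N - t)"
proof (cases "p + t < N")
  case True
  then show ?thesis using assms by simp
next
  case False
  then have "q = (p + t - N) mod N" using assms by (simp add: mod_if)
  also have "\<dots> = p + t - N" using assms by simp
  finally show ?thesis using assms False by simp
qed


lemma rot_card:
  fixes N t :: nat and A' :: "nat set"
  assumes "A' \<subseteq> {..<N}"
  shows "(\<Sum>c<N. (if (c + t) mod N \<in> A' then 1 else 0 :: nat)) = card A'"
proof (cases "N = 0")
  case True then show ?thesis using assms by simp
next
  case False
  define \<rho> where "\<rho> = (\<lambda>c. (c + t) mod N)"
  have inj: "inj_on \<rho> {..<N}"
  proof (rule inj_onI)
    fix a b assume ab: "a \<in> {..<N}" "b \<in> {..<N}" "\<rho> a = \<rho> b"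
    then have "(a + t) mod N = (b + t) mod N" by (simp add: \<rho>_def)
    then have "a mod N = b mod N" by (simp add: mod_eq_iff_dvd_symdiff_nat)
    then show "a = b" using ab by simp
  qed
  have img: "\<rho> ` {..<N} = {..<N}"
    using False by (intro endo_inj_surj[OF _ _ inj]) (auto simp: \<rho>_def)
  have "(\<Sum>c<N. (if \<rho> c \<in> A' then 1 else 0 :: nat)) = (\<Sum>x\<in>\<rho> ` {..<N}. (if x \<in> A' then 1 else 0 :: nat))"
    by (simp add: sum.reindex[OF inj] comp_def)
  also have "\<dots> = (\<Sum>x<N. (if x \<in> A' then 1 else 0 :: nat))" using img by simp
  also have "\<dots> = card ({..<N} \<inter> A')" by (simp add: sum.If_cases)
  also have "\<dots> = card A'" using assms by (simp add: Int_absorb1)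
  finally show ?thesis by (simp add: \<rho>_def)
qed


lemma part1:
  fixes n k :: nat and A :: "nat set"
  assumes k: "k \<ge> 1" and n: "n \<ge> 3 * k + 1" and A: "A \<subseteq> {1..n}" "card A = 3 * k - 2"
  shows "\<exists>S. S \<subseteq> A \<and> independent_set {1..n} (sq_cycle_adj n) S \<and> card S = k"
proof -
  define N where "N = 3 * k + 1"
  have finA: "finite A" using A(1) finite_subset by blast
  have cd: "card ({1..n} - A) = n - card A" using A(1) finA by (simp add: card_Diff_subset)
  have "N - card A \<le> card ({1..n} - A)" using cd A(2) n k by (simp add: N_def)
  then obtain C where C: "C \<subseteq> {1..n} - A" "card C = N - card A" "finite C"
    using obtain_subset_with_card_n by metis
  define B where "B = A \<union> C"
  have B1: "B \<subseteq> {1..n}" "A \<subseteq> B" "finite B" using C A finA by (auto simp: B_def)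
  have B2: "card B = N" unfolding B_def using C finA A(2) k
    by (subst card_Un_disjoint) (auto simp: N_def)
  define xs where "xs = sorted_list_of_set B"
  have len: "length xs = N" using B2 by (simp add: xs_def)
  have setxs: "set xs = B" using B1 by (simp add: xs_def)
  have dist: "distinct xs" by (simp add: xs_def)
  have sw: "sorted_wrt (<) xs" by (simp add: xs_def strict_sorted_list_of_set)
  define e where "e = (\<lambda>u. xs ! u)"
  have mono: "\<And>u v. u < v \<Longrightarrow> v < N \<Longrightarrow> e u < e v"
    using sorted_wrt_nth_less[OF sw] len by (simp add: e_def)
  have range: "\<And>u. u < N \<Longrightarrow> e u \<in> {1..n}"
    using nth_mem len setxs B1 unfolding e_def by blast
  have einj: "\<And>u v. u < N \<Longrightarrow> v < N \<Longrightarrow> e u = e v \<Longrightarrow> u = v"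
    using nth_eq_iff_index_eq[OF dist] len by (simp add: e_def)
  define A' where "A' = {u. u < N \<and> e u \<in> A}"
  have A'sub: "A' \<subseteq> {..<N}" by (auto simp: A'_def)
  have AeA: "A = e ` A'"
  proof
    show "e ` A' \<subseteq> A" by (auto simp: A'_def)
    show "A \<subseteq> e ` A'"
    proof
      fix a assume "a \<in> A"
      then have "a \<in> set xs" using B1 setxs by blast
      then obtain u where "u < length xs" "xs ! u = a" by (auto simp: in_set_conv_nth)
      then show "a \<in> e ` A'" using \<open>a \<in> A\<close> len by (auto simp: A'_def e_def)
    qed
  qed
  have inj_e: "inj_on e A'" using einj by (auto simp: inj_on_def A'_def)
  have cardA': "card A' = 3 * k - 2" using A(2) AeA card_image[OF inj_e] by simp
  define F where "F = (\<lambda>c. card {j\<in>{..<k}. (c + 3 * j) mod N \<in> A'})"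
  have Fsum: "\<And>c. F c = (\<Sum>j<k. if (c + 3 * j) mod N \<in> A' then 1 else 0)"
    by (simp add: F_def sum.If_cases Int_def)
  have tot: "(\<Sum>c<N. F c) = k * (3 * k - 2)"
  proof -
    have "(\<Sum>c<N. F c) = (\<Sum>c<N. \<Sum>j<k. if (c + 3 * j) mod N \<in> A' then 1 else 0)"
      by (simp add: Fsum)
    also have "\<dots> = (\<Sum>j<k. \<Sum>c<N. if (c + 3 * j) mod N \<in> A' then 1 else 0)"
      by (rule sum.swap)
    also have "\<dots> = (\<Sum>j<k. card A')"
      using rot_card[OF A'sub] by simp
    finally show ?thesis using cardA' by simp
  qed
  obtain c where c: "c < N" "F c \<ge> k"
  proof (rule ccontr)
    assume "\<not> thesis"
    then have "\<forall>c\<in>{..<N}. F c \<le> k - 1" using that by force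
    then have "(\<Sum>c<N. F c) \<le> card {..<N} * (k - 1)"
      using sum_bounded_above[of "{..<N}" F "k - 1"] by auto
    then have "k * (3 * k - 2) \<le> (3 * k + 1) * (k - 1)" using tot by (simp add: N_def)
    moreover obtain m where "k = Suc m" using k by (cases k) auto
    ultimately show False by (simp add: algebra_simps)
  qed
  have allin: "\<And>j. j < k \<Longrightarrow> (c + 3 * j) mod N \<in> A'"
  proof -
    have sub: "{j\<in>{..<k}. (c + 3 * j) mod N \<in> A'} \<subseteq> {..<k}" by auto
    have "{j\<in>{..<k}. (c + 3 * j) mod N \<in> A'} = {..<k}"
      using card_seteq[OF _ sub] c(2) by (simp add: F_def)
    then show "\<And>j. j < k \<Longrightarrow> (c + 3 * j) mod N \<in> A'" by blast
  qed
  define p where "p = (\<lambda>j. (c + 3 * j) mod N)"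
  have Npos: "0 < N" by (simp add: N_def)
  have pN: "\<And>j. p j < N" using Npos by (simp add: p_def)
  have pstep: "\<And>j j'. j < j' \<Longrightarrow> j' < k \<Longrightarrow>
      (p j < p j' \<and> p j' - p j = 3 * (j' - j)) \<or> (p j' < p j \<and> p j - p j' = N - 3 * (j' - j))"
  proof -
    fix j j' :: nat assume jj: "j < j'" "j' < k"
    have eq: "c + 3 * j' = (c + 3 * j) + 3 * (j' - j)" using jj by simp
    have "p j' = (p j + 3 * (j' - j)) mod N"
      unfolding p_def eq by (simp add: mod_add_left_eq)
    then show "(p j < p j' \<and> p j' - p j = 3 * (j' - j)) \<or> (p j' < p j \<and> p j - p j' = N - 3 * (j' - j))"
      using modpair[OF pN] jj by (simp add: N_def)
  qed
  have nadj: "\<And>j j'. j < j' \<Longrightarrow> j' < k \<Longrightarrow>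
      \<not> sq_cycle_adj n (e (p j)) (e (p j')) \<and> \<not> sq_cycle_adj n (e (p j')) (e (p j))"
  proof -
    fix j j' :: nat assume jj: "j < j'" "j' < k"
    from pstep[OF jj] show "\<not> sq_cycle_adj n (e (p j)) (e (p j')) \<and> \<not> sq_cycle_adj n (e (p j')) (e (p j))"
    proof
      assume h: "p j < p j' \<and> p j' - p j = 3 * (j' - j)"
      show ?thesis
        using indep_enum[of N e n "p j" "p j'", OF mono range] h jj pN by (auto simp: N_def)
    next
      assume h: "p j' < p j \<and> p j - p j' = N - 3 * (j' - j)"
      show ?thesis
        using indep_enum[of N e n "p j'" "p j", OF mono range] h jj pN by (auto simp: N_def)
    qed
  qed
  define S where "S = (\<lambda>j. e (p j)) ` {..<k}"
  have "S \<subseteq> A" using allin by (auto simp: S_def A'_def p_def)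
  moreover have "card S = k"
  proof -
    have "inj_on (\<lambda>j. e (p j)) {..<k}"
    proof (rule inj_onI)
      fix j j' assume h: "j \<in> {..<k}" "j' \<in> {..<k}" "e (p j) = e (p j')"
      then have "p j = p j'" using einj pN by blast
      then show "j = j'" using pstep[of j j'] pstep[of j' j] h by (cases j j' rule: linorder_cases) auto
    qed
    then show ?thesis by (simp add: S_def card_image)
  qed
  moreover have "independent_set {1..n} (sq_cycle_adj n) S"
    unfolding independent_set_def
  proof
    show "S \<subseteq> {1..n}" using range pN by (auto simp: S_def)
    show "\<forall>x\<in>S. \<forall>y\<in>S. \<not> sq_cycle_adj n x y"
    proof (intro ballI)
      fix x y assume "x \<in> S" "y \<in> S"
      then obtain j j' where "j < k" "j' < k" "x = e (p j)" "y = e (p j')" by (auto simp: S_def)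
      then show "\<not> sq_cycle_adj n x y"
        using nadj by (cases j j' rule: linorder_cases) (auto simp: sq_cycle_adj_def)
    qed
  qed
  ultimately show ?thesis by blast
qed


theorem lemma3p1:
  fixes n k :: nat
  assumes "k \<ge> 1" and "n \<ge> 3 * k + 1"
  shows "(\<forall>A. A \<subseteq> sq_cycle_vertices n \<and> card A = 3 * k - 2 \<longrightarrow>
            (\<exists>S. S \<subseteq> A \<and> independent_set (sq_cycle_vertices n) (sq_cycle_adj n) S \<and> card S = k))
       \<and> (\<forall>\<sigma>. \<sigma> \<subseteq> sq_cycle_vertices n \<and> card \<sigma> \<le> n - (3 * k - 2) \<longrightarrow>
            \<sigma> \<in> total_cut_complex (sq_cycle_vertices n) (sq_cycle_adj n) k)"
proof (intro conjI allI impI)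
  fix A assume "A \<subseteq> sq_cycle_vertices n \<and> card A = 3 * k - 2"
  then show "\<exists>S. S \<subseteq> A \<and> independent_set (sq_cycle_vertices n) (sq_cycle_adj n) S \<and> card S = k"
    using part1[OF assms] by (simp add: sq_cycle_vertices_def)
next
  fix \<sigma> assume h: "\<sigma> \<subseteq> sq_cycle_vertices n \<and> card \<sigma> \<le> n - (3 * k - 2)"
  then have sub: "\<sigma> \<subseteq> {1..n}" by (simp add: sq_cycle_vertices_def)
  then have fin: "finite \<sigma>" using finite_subset by blast
  have "card ({1..n} - \<sigma>) = n - card \<sigma>" using sub fin by (simp add: card_Diff_subset)
  then have "3 * k - 2 \<le> card ({1..n} - \<sigma>)" using h assms by arith
  then obtain A where A: "A \<subseteq> {1..n} - \<sigma>" "card A = 3 * k - 2"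
    using obtain_subset_with_card_n by metis
  then obtain S where S: "S \<subseteq> A" "independent_set {1..n} (sq_cycle_adj n) S" "card S = k"
    using part1[OF assms, of A] by blast
  then show "\<sigma> \<in> total_cut_complex (sq_cycle_vertices n) (sq_cycle_adj n) k"
    using sub A unfolding total_cut_complex_def sq_cycle_vertices_def by blast
qed

end
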